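(* Let $\mathcal{E}$ be a metric space and $\lambda,\kappa,\mu\colon\mathcal{E}\to[0,\infty)$ continuous, and let $t\ge0$. Then the map $\phi_t\colon D([0,\infty);\mathcal{E})\to[0,\infty)$, $$\phi_t(f)=\int_0^t\lambda(f(s))\,e^{-\kappa(f(s))\int_s^t\mu(f(r))\,dr}\,ds,$$ is continuous, where $D([0,\infty);\mathcal{E})$ carries the Skorokhod $J_1$ topology.
   Context: $D([0,\infty);\mathcal{E})$ is the space of càdlàg functions $[0,\infty)\to\mathcal{E}$, equipped with the Skorokhod $J_1$ topology (e.g. induced by the metric $d^\circ(f,g)=\inf_{\lambda\in\Lambda}[\gamma(\lambda)\vee\int_0^\infty e^{-u}\sup_{t\ge0}(1\wedge\rho(f(t\wedge u),g(\lambda(t)\wedge u)))\,du]$, where $\Lambda$ is the set of increasing homeomorphisms of $[0,\infty)$, $\gamma(\lambda)=\sup_{t>s\ge0}|\log(\lambda(t)-\lambda(s))-\log(t-s)|$, and $\rho$ the metric on $\mathcal{E}$). *)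

theory Defs
  imports "HOL-Analysis.Analysis"
begin

text \<open>Cadlag functions on [0,\<infinity>) (values at negative times are irrelevant).\<close>
definition cadlag :: "(real \<Rightarrow> 'a::metric_space) \<Rightarrow> bool" where
  "cadlag f \<longleftrightarrow> (\<forall>t\<ge>0. (f \<longlongrightarrow> f t) (at_right t) \<and> (t > 0 \<longrightarrow> (\<exists>l. (f \<longlongrightarrow> l) (at_left t))))"

definition Skorokhod_D :: "(real \<Rightarrow> 'a::metric_space) set" where
  "Skorokhod_D = {f. cadlag f}"

definition Lambda_set :: "(real \<Rightarrow> real) set" where
  "Lambda_set = {l. mono_on {0..} l \<and> (\<exists>l'. homeomorphism {0..} {0..} l l')}"

definition gamma_sk :: "(real \<Rightarrow> real) \<Rightarrow> ereal" where
  "gamma_sk l = (SUP st\<in>{(s,t). 0 \<le> s \<and> s < t}.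
      ereal \<bar>ln (l (snd st) - l (fst st)) - ln (snd st - fst st)\<bar>)"

definition sk_integrand :: "(real \<Rightarrow> 'a::metric_space) \<Rightarrow> (real \<Rightarrow> 'a) \<Rightarrow> (real \<Rightarrow> real) \<Rightarrow> real \<Rightarrow> real" where
  "sk_integrand f g l u = (SUP t\<in>{0..}. min 1 (dist (f (min t u)) (g (min (l t) u))))"

definition skorokhod_dist :: "(real \<Rightarrow> 'a::metric_space) \<Rightarrow> (real \<Rightarrow> 'a) \<Rightarrow> ereal" where
  "skorokhod_dist f g = (INF l\<in>Lambda_set.
      max (gamma_sk l)
          (enn2ereal (\<integral>\<^sup>+ u. indicator {0..} u * ennreal (exp (- u) * sk_integrand f g l u) \<partial>lborel)))"

definition phi_t :: "('a \<Rightarrow> real) \<Rightarrow> ('a \<Rightarrow> real) \<Rightarrow> ('a \<Rightarrow> real) \<Rightarrow> real \<Rightarrow> (real \<Rightarrow> 'a) \<Rightarrow> real" where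
  "phi_t lam kap mu t f = (LBINT s:{0..t}. lam (f s) * exp (- kap (f s) * (LBINT r:{s..t}. mu (f r))))"

end

theory Submission
  imports Defs
begin

definition jumps :: "(real \<Rightarrow> 'a::metric_space) \<Rightarrow> real set" where
  "jumps f = {s. 0 < s \<and> \<not> (f \<longlongrightarrow> f s) (at_left s)}"

lemma cadlag_cont:
  assumes "cadlag f" "s \<ge> 0" "s \<notin> jumps f"
  shows "(f \<longlongrightarrow> f s) (at s within {0..})"
proof (cases "s = 0")
  case True
  then show ?thesis using assms(1) unfolding cadlag_def by (simp add: at_within_Ici_at_right)
next
  case False
  then have "s > 0" using assms(2) by simp
  then have "(f \<longlongrightarrow> f s) (at_left s)" "(f \<longlongrightarrow> f s) (at_right s)"
    using assms unfolding jumps_def cadlag_def by auto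
  then have "(f \<longlongrightarrow> f s) (at s)" by (rule filterlim_split_at)
  then show ?thesis by (rule tendsto_within_subset) simp
qed

lemma jump_core:
  fixes f :: "real \<Rightarrow> 'a::metric_space"
  assumes "\<forall>x\<in>{a<..<b}. dist (f x) c < e/2" "s \<in> {a<..<b}" "(f \<longlongrightarrow> l) (at_left s)"
  shows "dist l (f s) < e"
proof -
  have "((\<lambda>x. dist (f x) c) \<longlongrightarrow> dist l c) (at_left s)"
    by (intro tendsto_dist assms(3) tendsto_const)
  moreover have "eventually (\<lambda>x. dist (f x) c \<le> e/2) (at_left s)"
  proof -
    have "eventually (\<lambda>x. x \<in> {a<..<s}) (at_left s)"
      using assms(2) eventually_at_left_real[of a s] by auto
    then show ?thesis by eventually_elim (use assms(1,2) in \<open>auto intro: less_imp_le\<close>)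
  qed
  ultimately have "dist l c \<le> e/2"
    by (rule tendsto_upperbound) (simp add: trivial_limit_at_left_real)
  moreover have "dist (f s) c < e/2" using assms(1,2) by auto
  ultimately show ?thesis by (metis dist_commute dist_triangle le_less_trans add_le_less_mono field_sum_of_halves)
qed

lemma finite_jump_piece:
  fixes f :: "real \<Rightarrow> 'a::metric_space"
  assumes cf: "cadlag f" and e: "e > 0"
  shows "finite {s\<in>{0<..m}. \<forall>l. (f \<longlongrightarrow> l) (at_left s) \<longrightarrow> dist l (f s) \<ge> e}" (is "finite ?E")
proof (rule ccontr)
  assume inf: "infinite ?E"
  have "?E \<subseteq> {0..m}" by auto
  then obtain y where y: "y \<in> {0..m}" "y islimpt ?E"
    using Heine_Borel_imp_Bolzano_Weierstrass[OF compact_Icc inf] by blast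
  have "(f \<longlongrightarrow> f y) (at_right y)" using cf y(1) unfolding cadlag_def by auto
  then have "eventually (\<lambda>x. dist (f x) (f y) < e/2) (at_right y)"
    using tendsto_iff e half_gt_zero by blast
  then obtain b1 where b1: "b1 > y" "\<forall>x>y. x < b1 \<longrightarrow> dist (f x) (f y) < e/2"
    by (auto simp: eventually_at_right[of y "y+1"])
  have bpos: "b1 - y > 0" using b1(1) by simp
  obtain s where s: "s \<in> ?E" "s \<noteq> y" "\<bar>s - y\<bar> < b1 - y"
    using y(2) bpos unfolding islimpt_approachable_real by blast
  have "s > 0" using s by auto
  then obtain l where l: "(f \<longlongrightarrow> l) (at_left s)" using cf unfolding cadlag_def by (meson less_eq_real_def)
  show False
  proof (cases "s > y")
    case True
    have "dist l (f s) < e"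
      by (rule jump_core[of y b1 f "f y" e s l]) (use b1 s True l in auto)
    then show False using s(1) l by auto
  next
    case False
    then have "s < y" using s(2) by auto
    then have "y > 0" using \<open>s > 0\<close> by auto
    then obtain L where L: "(f \<longlongrightarrow> L) (at_left y)" using cf y(1) unfolding cadlag_def by (meson less_eq_real_def)
    then have "eventually (\<lambda>x. dist (f x) L < e/2) (at_left y)"
      using tendsto_iff e half_gt_zero by blast
    then obtain b0 where b0: "b0 < y" "\<forall>x>b0. x < y \<longrightarrow> dist (f x) L < e/2"
      by (auto simp: eventually_at_left[of "y - 1" y])
    have mpos: "min (b1 - y) (y - b0) > 0" using b1(1) b0(1) by simp
    obtain s where s: "s \<in> ?E" "s \<noteq> y" "\<bar>s - y\<bar> < min (b1 - y) (y - b0)"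
      using y(2) mpos unfolding islimpt_approachable_real by blast
    have "s > 0" using s by auto
    then obtain l where l: "(f \<longlongrightarrow> l) (at_left s)" using cf unfolding cadlag_def by (meson less_eq_real_def)
    show False
    proof (cases "s > y")
      case True
      have "dist l (f s) < e"
        by (rule jump_core[of y b1 f "f y" e s l]) (use b1 s True l in auto)
      then show False using s(1) l by auto
    next
      case False
      then have "s < y" using s(2) by auto
      have "dist l (f s) < e"
        by (rule jump_core[of b0 y f L e s l]) (use b0 s \<open>s < y\<close> l in auto)
      then show False using s(1) l by auto
    qed
  qed
qed

lemma countable_jumps:
  fixes f :: "real \<Rightarrow> 'a::metric_space"
  assumes cf: "cadlag f"
  shows "countable (jumps f)"
proof -
  let ?E = "\<lambda>m::nat. \<lambda>k::nat. {s\<in>{0<..real m}. \<forall>l. (f \<longlongrightarrow> l) (at_left s) \<longrightarrow> dist l (f s) \<ge> 1/(Suc k)}"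
  have "jumps f \<subseteq> (\<Union>m. \<Union>k. ?E m k)"
  proof
    fix s assume s: "s \<in> jumps f"
    then have s0: "s > 0" and nl: "\<not> (f \<longlongrightarrow> f s) (at_left s)" by (auto simp: jumps_def)
    obtain l where l: "(f \<longlongrightarrow> l) (at_left s)" using cf s0 unfolding cadlag_def by (meson less_eq_real_def)
    have "l \<noteq> f s" using l nl by auto
    then have "dist l (f s) > 0" by simp
    then obtain k where k: "inverse (real (Suc k)) < dist l (f s)" using reals_Archimedean by blast
    obtain m :: nat where m: "s \<le> real m" using real_arch_simple by blast
    have "s \<in> ?E m k"
    proof -
      have "dist l' (f s) \<ge> 1/(Suc k)" if "(f \<longlongrightarrow> l') (at_left s)" for l'
      proof -
        have "l' = l" using tendsto_unique[OF _ that l] by (simp add: trivial_limit_at_left_real)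
        then show ?thesis using k by (simp add: inverse_eq_divide)
      qed
      then show ?thesis using s0 m by auto
    qed
    then show "s \<in> (\<Union>m. \<Union>k. ?E m k)" by blast
  qed
  moreover have fin: "finite (?E m k)" for m k
    by (rule finite_jump_piece[OF cf]) simp
  then have "countable (?E m k)" for m k by (rule countable_finite)
  then have "countable (\<Union>m. \<Union>k. ?E m k)"
    by blast
  ultimately show ?thesis by (rule countable_subset)
qed
lemma cadlag_subseq:
  fixes f :: "real \<Rightarrow> 'a::metric_space" and T :: real and s :: "nat \<Rightarrow> real"
  assumes cf: "cadlag f" and s: "\<forall>n. s n \<in> {0..T}"
  shows "\<exists>r y. strict_mono r \<and> (\<lambda>n. f (s (r n))) \<longlonglongrightarrow> y"
proof -
  obtain x r1 where x: "x \<in> {0..T}" "strict_mono r1" "(s \<circ> r1) \<longlonglongrightarrow> x"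
    using seq_compactE[OF compact_imp_seq_compact[OF compact_Icc[of "0::real" T]] s] by blast
  obtain r2 where r2: "strict_mono r2" "monoseq (\<lambda>n. (s \<circ> r1) (r2 n))" using seq_monosub by blast
  define \<sigma> where "\<sigma> = (\<lambda>n. s (r1 (r2 n)))"
  have sl: "\<sigma> \<longlonglongrightarrow> x" using LIMSEQ_subseq_LIMSEQ[OF x(3) r2(1)] by (simp add: \<sigma>_def o_def)
  have mono: "incseq \<sigma> \<or> decseq \<sigma>" using r2(2) unfolding monoseq_iff \<sigma>_def by (simp add: o_def)
  have s0: "\<sigma> n \<ge> 0" for n using s by (simp add: \<sigma>_def)
  have "\<exists>y. (\<lambda>n. f (\<sigma> n)) \<longlonglongrightarrow> y"
  proof (cases "\<exists>n. \<sigma> n = x")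
    case True
    then obtain n where n: "\<sigma> n = x" by blast
    have "\<forall>m\<ge>n. \<sigma> m = x"
    proof (intro allI impI)
      fix m assume m: "n \<le> m"
      show "\<sigma> m = x"
        using mono
      proof
        assume i: "incseq \<sigma>"
        have "\<sigma> n \<le> \<sigma> m" by (rule incseqD[OF i m])
        moreover have "\<sigma> m \<le> x" by (rule incseq_le[OF i sl])
        ultimately show ?thesis using n by linarith
      next
        assume d: "decseq \<sigma>"
        have "\<sigma> m \<le> \<sigma> n" by (rule decseqD[OF d m])
        moreover have "x \<le> \<sigma> m" by (rule decseq_ge[OF d sl])
        ultimately show ?thesis using n by linarith
      qed
    qed
    then have "eventually (\<lambda>m. f (\<sigma> m) = f x) sequentially"
      unfolding eventually_sequentially by auto
    then show ?thesis by (intro exI[of _ "f x"] tendsto_eventually)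
  next
    case False
    show ?thesis using mono
    proof
      assume i: "incseq \<sigma>"
      have lt: "\<sigma> m < x" for m
      proof -
        have "\<sigma> m \<le> x" by (rule incseq_le[OF i sl])
        moreover have "\<sigma> m \<noteq> x" using False by blast
        ultimately show ?thesis by simp
      qed
      have "x > 0" using s0[of 0] lt[of 0] by linarith
      then obtain L where L: "(f \<longlongrightarrow> L) (at_left x)" using cf x(1) unfolding cadlag_def by (meson less_eq_real_def)
      have "filterlim \<sigma> (at_left x) sequentially"
        by (rule tendsto_imp_filterlim_at_left[OF sl]) (simp add: lt)
      then show ?thesis using filterlim_compose[OF L, of \<sigma>] by blast
    next
      assume d: "decseq \<sigma>"
      have gt: "\<sigma> m > x" for m
      proof -
        have "x \<le> \<sigma> m" by (rule decseq_ge[OF d sl])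
        moreover have "\<sigma> m \<noteq> x" using False by blast
        ultimately show ?thesis by simp
      qed
      have R: "(f \<longlongrightarrow> f x) (at_right x)" using cf x(1) unfolding cadlag_def by auto
      have "filterlim \<sigma> (at_right x) sequentially"
        by (rule tendsto_imp_filterlim_at_right[OF sl]) (simp add: gt)
      then show ?thesis using filterlim_compose[OF R, of \<sigma>] by blast
    qed
  qed
  then obtain y where y: "(\<lambda>n. f (\<sigma> n)) \<longlonglongrightarrow> y" by blast
  have "strict_mono (r1 \<circ> r2)" using x(2) r2(1) by (rule strict_mono_o)
  then show ?thesis using y unfolding \<sigma>_def
    by (intro exI[of _ "r1 \<circ> r2"] exI[of _ y]) simp
qed

lemma cadlag_bound:
  fixes f :: "real \<Rightarrow> 'a::metric_space" and h :: "'a \<Rightarrow> real"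
  assumes cf: "cadlag f" and h: "continuous_on UNIV h"
  shows "\<exists>\<delta>>0. \<exists>B. \<forall>s y. s \<in> {0..T} \<longrightarrow> dist y (f s) < \<delta> \<longrightarrow> \<bar>h y\<bar> \<le> B"
proof (rule ccontr)
  assume neg: "\<not> ?thesis"
  have "\<exists>s y. s \<in> {0..T} \<and> dist y (f s) < inverse (real (Suc n)) \<and> \<bar>h y\<bar> > real n" for n
  proof -
    have "inverse (real (Suc n)) > 0" by simp
    then have "\<not> (\<forall>s y. s \<in> {0..T} \<longrightarrow> dist y (f s) < inverse (real (Suc n)) \<longrightarrow> \<bar>h y\<bar> \<le> real n)"
      using neg by blast
    then show ?thesis by (auto simp: not_le)
  qed
  then obtain s y where sy: "\<And>n. s n \<in> {0..T} \<and> dist (y n) (f (s n)) < inverse (real (Suc n)) \<and> \<bar>h (y n)\<bar> > real n"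
    by metis
  obtain r z where r: "strict_mono r" "(\<lambda>n. f (s (r n))) \<longlonglongrightarrow> z"
    using cadlag_subseq[OF cf, of s T] sy by blast
  have "(\<lambda>n. dist (y (r n)) z) \<longlonglongrightarrow> 0"
  proof (rule tendsto_sandwich[of "\<lambda>n. 0" _ _ "\<lambda>n. inverse (real (Suc n)) + dist (f (s (r n))) z"])
    show "\<forall>\<^sub>F n in sequentially. 0 \<le> dist (y (r n)) z" by simp
    show "\<forall>\<^sub>F n in sequentially. dist (y (r n)) z \<le> inverse (real (Suc n)) + dist (f (s (r n))) z"
    proof (rule always_eventually, rule allI)
      fix n
      have "dist (y (r n)) (f (s (r n))) < inverse (real (Suc (r n)))" using sy by blast
      also have "\<dots> \<le> inverse (real (Suc n))" using seq_suble[OF r(1), of n]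
        by (simp add: le_imp_inverse_le)
      finally have "dist (y (r n)) (f (s (r n))) < inverse (real (Suc n))" .
      moreover have "dist (y (r n)) z \<le> dist (y (r n)) (f (s (r n))) + dist (f (s (r n))) z"
        by (rule dist_triangle)
      ultimately show "dist (y (r n)) z \<le> inverse (real (Suc n)) + dist (f (s (r n))) z"
        by linarith
    qed
    show "(\<lambda>n. 0::real) \<longlonglongrightarrow> 0" by simp
    have dz: "(\<lambda>n. dist (f (s (r n))) z) \<longlonglongrightarrow> 0" using tendsto_dist_iff[THEN iffD1, OF r(2)] .
    show "(\<lambda>n. inverse (real (Suc n)) + dist (f (s (r n))) z) \<longlonglongrightarrow> 0"
      using tendsto_add[OF LIMSEQ_inverse_real_of_nat dz] by simp
  qed
  then have yz: "(\<lambda>n. y (r n)) \<longlonglongrightarrow> z" by (rule tendsto_dist_iff[THEN iffD2])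
  have "(\<lambda>n. h (y (r n))) \<longlonglongrightarrow> h z"
    using continuous_on_tendsto_compose[OF h yz] by simp
  then have "Bseq (\<lambda>n. h (y (r n)))" by (rule convergent_imp_Bseq[OF convergentI])
  then obtain K where K: "\<And>n. norm (h (y (r n))) \<le> K" unfolding Bseq_def by blast
  obtain n :: nat where n: "K \<le> real n" using real_arch_simple by blast
  have "real n \<le> real (r n)" using seq_suble[OF r(1)] by simp
  then show False using K[of n] sy[of "r n"] n by simp
qed

lemma lambda_props:
  assumes "l \<in> Lambda_set"
  obtains l' where "l 0 = 0" "\<And>x. x \<ge> 0 \<Longrightarrow> l' (l x) = x" "\<And>y. y \<ge> 0 \<Longrightarrow> l (l' y) = y"
    "\<And>y. y \<ge> 0 \<Longrightarrow> l' y \<ge> 0" "\<And>x. x \<ge> 0 \<Longrightarrow> l x \<ge> 0"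
proof -
  from assms obtain l' where mo: "mono_on {0..} l" and h: "homeomorphism {0..} {0..} l l'"
    unfolding Lambda_set_def by blast
  have h1: "\<And>x. x \<ge> 0 \<Longrightarrow> l' (l x) = x" and h2: "l ` {0..} = {0..}"
    and h3: "\<And>y. y \<ge> 0 \<Longrightarrow> l (l' y) = y" and h4: "l' ` {0..} = {0..}"
    using h unfolding homeomorphism_def by auto
  have h5: "\<And>x. x \<ge> 0 \<Longrightarrow> l x \<ge> 0" using h2 by auto
  have h6: "\<And>y. y \<ge> 0 \<Longrightarrow> l' y \<ge> 0" using h4 by auto
  have "0 \<in> l ` {0..}" using h2 by simp
  then obtain x where x: "x \<ge> 0" "l x = 0" by auto
  have "l 0 \<le> l x" by (rule mono_onD[OF mo]) (use x in auto)
  then have "l 0 = 0" using x h5[of 0] by simp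
  then show ?thesis using that h1 h3 h6 h5 by blast
qed

lemma J1:
  fixes f :: "real \<Rightarrow> 'a::metric_space"
  assumes t: "t \<ge> 0" and eta: "\<eta> > 0"
  shows "\<exists>d>0. \<forall>g. skorokhod_dist f g < ereal d \<longrightarrow>
           (\<forall>s\<in>{0..t}. \<exists>w\<in>{0..2*t+1}. \<bar>w - s\<bar> < \<eta> \<and> dist (f w) (g s) < \<eta>)"
proof -
  define T where "T = 2*t+1"
  define c where "c = min (1/2) (\<eta>/2)"
  define m where "m = min 1 (\<eta>/(T+1))"
  define d1 where "d1 = ln (1 + m)"
  define d2 where "d2 = exp (-(T+1)) * c"
  define d where "d = min d1 d2"
  have T: "T \<ge> 1" "T \<ge> 2*t" using t by (auto simp: T_def)
  have c: "c > 0" "c \<le> 1/2" "c < \<eta>" using eta by (auto simp: c_def)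
  have m12: "m > 0" "m \<le> 1" "m \<le> \<eta>/(T+1)" using eta T
    by (auto simp: m_def)
  have "m * (T+1) \<le> \<eta>/(T+1) * (T+1)" using m12(3) T by (intro mult_right_mono) auto
  then have m: "m > 0" "m \<le> 1" "m * (T+1) \<le> \<eta>" using m12 T by auto
  have d1: "d1 > 0" using m by (simp add: d1_def)
  have d2: "d2 > 0" using c by (simp add: d2_def)
  have d: "d > 0" using d1 d2 by (simp add: d_def)
  have Ed: "exp d \<le> 1 + m"
  proof -
    have "exp d \<le> exp d1" by (simp add: d_def)
    also have "\<dots> = 1 + m" using m by (simp add: d1_def)
    finally show ?thesis .
  qed
  show ?thesis
  proof (intro exI[of _ d] conjI allI impI ballI d)
    fix g :: "real \<Rightarrow> 'a" and s :: real
    assume less: "skorokhod_dist f g < ereal d" and s: "s \<in> {0..t}"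
    define N where "N l = (\<integral>\<^sup>+ u. indicator {0..} u * ennreal (exp (- u) * sk_integrand f g l u) \<partial>lborel)" for l
    obtain l where l: "l \<in> Lambda_set" "max (gamma_sk l) (enn2ereal (N l)) < ereal d"
      using less unfolding skorokhod_dist_def N_def INF_less_iff by blast
    have G: "gamma_sk l < ereal d" and NI: "enn2ereal (N l) < ereal d" using l(2) by auto
    have NL: "N l < ennreal d" using NI d by (simp add: less_ennreal.rep_eq)
    obtain l' where lp: "l 0 = 0" "\<And>x. x \<ge> 0 \<Longrightarrow> l' (l x) = x" "\<And>y. y \<ge> 0 \<Longrightarrow> l (l' y) = y"
      "\<And>y. y \<ge> 0 \<Longrightarrow> l' y \<ge> 0" "\<And>x. x \<ge> 0 \<Longrightarrow> l x \<ge> 0"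
      using lambda_props[OF l(1)] by blast
    have "\<exists>u\<in>{T..T+1}. sk_integrand f g l u \<le> c"
    proof (rule ccontr)
      assume "\<not> ?thesis"
      then have big: "\<And>u. u \<in> {T..T+1} \<Longrightarrow> sk_integrand f g l u > c" by force
      have "(\<integral>\<^sup>+ u. ennreal d2 * indicator {T..T+1} u \<partial>lborel) \<le> N l"
        unfolding N_def
      proof (rule nn_integral_mono)
        fix u :: real
        show "ennreal d2 * indicator {T..T+1} u \<le> indicator {0..} u * ennreal (exp (- u) * sk_integrand f g l u)"
        proof (cases "u \<in> {T..T+1}")
          case True
          have "exp (-(T+1)) \<le> exp (-u)" using True by simp
          then have "d2 \<le> exp (-u) * sk_integrand f g l u"
            unfolding d2_def using big[OF True] c(1) by (intro mult_mono) auto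
          then show ?thesis using True T by (auto intro: ennreal_leI)
        qed simp
      qed
      also have "\<dots> < ennreal d" by (rule NL)
      also have "\<dots> \<le> ennreal d2" by (simp add: d_def ennreal_leI)
      finally show False by (simp add: nn_integral_cmult_indicator)
    qed
    then obtain u where u: "u \<in> {T..T+1}" "sk_integrand f g l u \<le> c" by blast
    have key: "dist (f w) (g (l w)) < \<eta>" if w: "w \<ge> 0" "w \<le> T" "l w \<le> T" for w
    proof -
      have "min 1 (dist (f (min w u)) (g (min (l w) u))) \<le> sk_integrand f g l u"
        unfolding sk_integrand_def
        by (rule cSUP_upper) (use w in \<open>auto intro!: bdd_aboveI2[where M=1]\<close>)
      moreover have "min w u = w" "min (l w) u = l w" using w u by auto
      ultimately have "min 1 (dist (f w) (g (l w))) \<le> c" using u(2) by simp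
      then show ?thesis using c by (auto simp: min_def split: if_splits)
    qed
    define w where "w = l' s"
    have w0: "w \<ge> 0" and lw: "l w = s" using lp s by (auto simp: w_def)
    show "\<exists>w\<in>{0..2*t+1}. \<bar>w - s\<bar> < \<eta> \<and> dist (f w) (g s) < \<eta>"
    proof (cases "w = 0")
      case True
      then have "s = 0" using lw lp(1) by simp
      then show ?thesis using key[of 0] lp(1) T eta t True lw by (auto simp: T_def)
    next
      case False
      then have wpos: "w > 0" using w0 by simp
      have "s \<noteq> 0"
      proof
        assume "s = 0"
        then have "l' (l w) = l' (l 0)" using lw lp(1) by simp
        then show False using lp(2)[of w] lp(2)[of 0] w0 False by simp
      qed
      then have spos: "s > 0" using s by simp
      have mem: "(0,w) \<in> {(s,t). 0 \<le> s \<and> s < (t::real)}" using wpos by simp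
      have "ereal \<bar>ln (l w - l 0) - ln (w - 0)\<bar> \<le> gamma_sk l"
        unfolding gamma_sk_def
        by (rule order_trans[OF _ SUP_upper[of "(0,w)"]]) (use wpos in auto)
      then have "ereal \<bar>ln (l w - l 0) - ln (w - 0)\<bar> < ereal d" by (rule le_less_trans[OF _ G])
      then have "\<bar>ln s - ln w\<bar> < d" using lw lp(1) by simp
      then have lsw: "ln (s / w) < d" "ln (w / s) < d" using spos wpos by (auto simp: ln_div)
      have "s / w = exp (ln (s / w))" "w / s = exp (ln (w / s))" using spos wpos by simp_all
      then have r1: "s / w < exp d" and r2: "w / s < exp d" using lsw by (metis exp_less_mono)+
      have E: "exp d \<le> 1 + m" by (rule Ed)
      have "s / w < 1 + m" using r1 E by linarith
      then have sw: "s < (1 + m) * w" using wpos by (simp add: pos_divide_less_eq)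
      have "w / s < 1 + m" using r2 E by linarith
      then have ws: "w < (1 + m) * s" using spos by (simp add: pos_divide_less_eq)
      have "(1 + m) * s \<le> 2 * t" by (rule mult_mono) (use s m in auto)
      then have wT: "w \<le> 2*t" using ws by simp
      have mT: "m * T < \<eta>"
      proof -
        have "m * T < m * (T + 1)" using m by simp
        also have "\<dots> \<le> \<eta>" using m(3) by (simp add: mult.commute)
        finally show ?thesis .
      qed
      have A: "s - w < \<eta>"
      proof -
        have "s - w < m * w" using sw by (simp add: algebra_simps)
        also have "m * w \<le> m * T" using wT T m by (intro mult_left_mono) auto
        finally show ?thesis using mT by linarith
      qed
      have B: "w - s < \<eta>"
      proof -
        have "w - s < m * s" using ws by (simp add: algebra_simps)
        also have "m * s \<le> m * T" using s T m by (intro mult_left_mono) auto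
        finally show ?thesis using mT by linarith
      qed
      have "dist (f w) (g (l w)) < \<eta>" by (rule key) (use w0 wT T lw s in auto)
      then show ?thesis using A B w0 wT lw by (intro bexI[of _ w]) auto
    qed
  qed
qed

lemma meas_exc:
  fixes F :: "real \<Rightarrow> real"
  assumes D: "countable D" and c: "\<And>s. s \<in> {a..b} - D \<Longrightarrow> (F \<longlongrightarrow> F s) (at s within {a..b})"
  shows "(\<lambda>x. indicator {a..b} x * F x) \<in> borel_measurable lborel"
proof -
  let ?S = "{a..b} - D"
  have Dn: "D \<in> sets borel" using null_setsD2[OF countable_imp_null_set_lborel[OF D]] by simp
  have S: "?S \<in> sets borel" using Dn by (intro sets.Diff) auto
  have "continuous_on ?S F" unfolding continuous_on_def
  proof
    fix x assume x: "x \<in> ?S"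
    show "(F \<longlongrightarrow> F x) (at x within ?S)" using tendsto_within_subset[OF c[OF x], of ?S] by auto
  qed
  then have m: "(\<lambda>x. indicator ?S x *\<^sub>R F x) \<in> borel_measurable borel"
    by (rule borel_measurable_continuous_on_indicator[OF S])
  have "(\<lambda>x. indicator {a..b} x * F x) \<in> borel_measurable borel"
  proof (rule measurable_discrete_difference[OF m D])
    show "\<And>x. x \<in> D \<Longrightarrow> {x} \<in> sets borel" by simp
    show "\<And>x. x \<in> D \<Longrightarrow> indicator {a..b} x * F x \<in> space borel" by simp
    show "\<And>x. x \<in> space borel \<Longrightarrow> x \<notin> D \<Longrightarrow> indicator ?S x *\<^sub>R F x = indicator {a..b} x * F x"
      by (simp add: indicator_def)
  qed
  then show ?thesis by simp
qed

lemma int_exc: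
  fixes F :: "real \<Rightarrow> real"
  assumes D: "countable D" and c: "\<And>s. s \<in> {a..b} - D \<Longrightarrow> (F \<longlongrightarrow> F s) (at s within {a..b})"
    and B: "\<And>s. s \<in> {a..b} \<Longrightarrow> \<bar>F s\<bar> \<le> B"
  shows "set_integrable lborel {a..b} F"
  unfolding set_integrable_def
proof (rule integrableI_bounded_set[where A="{a..b}" and B=B])
  show "(\<lambda>x. indicator {a..b} x *\<^sub>R F x) \<in> borel_measurable lborel"
    using meas_exc[OF D c] by simp
qed (use B in \<open>auto simp: indicator_def emeasure_lborel_Icc_eq\<close>)

lemma cadlag_comp_cont:
  fixes g :: "real \<Rightarrow> 'a::metric_space" and h :: "'a \<Rightarrow> real"
  assumes cg: "cadlag g" and h: "continuous_on UNIV h" and s: "s \<ge> 0" "s \<notin> jumps g"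
    and S: "S \<subseteq> {0..}"
  shows "((\<lambda>x. h (g x)) \<longlongrightarrow> h (g s)) (at s within S)"
proof -
  have "(g \<longlongrightarrow> g s) (at s within S)"
    by (rule tendsto_within_subset[OF cadlag_cont[OF cg s] S])
  then show ?thesis using continuous_on_tendsto_compose[OF h] by fastforce
qed

lemma cadlag_comp_bound:
  fixes g :: "real \<Rightarrow> 'a::metric_space" and h :: "'a \<Rightarrow> real"
  assumes cg: "cadlag g" and h: "continuous_on UNIV h"
  shows "\<exists>B. \<forall>s\<in>{0..T}. \<bar>h (g s)\<bar> \<le> B"
proof -
  obtain \<delta> B where "\<delta> > 0" "\<forall>s y. s \<in> {0..T} \<longrightarrow> dist y (g s) < \<delta> \<longrightarrow> \<bar>h y\<bar> \<le> B"
    using cadlag_bound[OF cg h, of T] by blast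
  then show ?thesis by (intro exI[of _ B]) auto
qed

lemma cadlag_comp_int:
  fixes g :: "real \<Rightarrow> 'a::metric_space" and h :: "'a \<Rightarrow> real"
  assumes cg: "cadlag g" and h: "continuous_on UNIV h" and a: "a \<ge> 0"
  shows "set_integrable lborel {a..b} (\<lambda>x. h (g x))"
proof -
  obtain B where B: "\<forall>s\<in>{0..b}. \<bar>h (g s)\<bar> \<le> B" using cadlag_comp_bound[OF cg h] by blast
  show ?thesis
  proof (rule int_exc[OF countable_jumps[OF cg]])
    show "((\<lambda>x. h (g x)) \<longlongrightarrow> h (g s)) (at s within {a..b})" if "s \<in> {a..b} - jumps g" for s
      by (rule cadlag_comp_cont[OF cg h]) (use that a in auto)
    show "\<bar>h (g s)\<bar> \<le> B" if "s \<in> {a..b}" for s using B that a by auto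
  qed
qed

lemma M_cont:
  fixes g :: "real \<Rightarrow> 'a::metric_space" and mu :: "'a \<Rightarrow> real"
  assumes cg: "cadlag g" and h: "continuous_on UNIV mu"
  shows "continuous_on {0..t} (\<lambda>s. LBINT r:{s..t}. mu (g r))"
proof -
  have eq: "(LBINT r:{s..t}. mu (g r)) = integral {s..t} (\<lambda>r. mu (g r))" if "s \<in> {0..t}" for s
  proof -
    have "s \<ge> 0" using that by simp
    then show ?thesis by (rule set_borel_integral_eq_integral(2)[OF cadlag_comp_int[OF cg h]])
  qed
  have "(\<lambda>r. mu (g r)) integrable_on {0..t}"
    by (rule set_borel_integral_eq_integral(1)[OF cadlag_comp_int[OF cg h]]) simp
  then have c: "continuous_on {0..t} (\<lambda>s. integral {s..t} (\<lambda>r. mu (g r)))"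
    by (rule indefinite_integral_continuous_1')
  have "continuous_on {0..t} (\<lambda>s. LBINT r:{s..t}. mu (g r)) = continuous_on {0..t} (\<lambda>s. integral {s..t} (\<lambda>r. mu (g r)))"
    by (rule continuous_on_cong[OF refl eq])
  then show ?thesis using c by (rule iffD2)
qed

lemma M_nonneg:
  assumes "\<And>x. mu x \<ge> (0::real)"
  shows "0 \<le> (LBINT r:{s..t}. mu (g r))"
  unfolding set_lebesgue_integral_def by (rule Bochner_Integration.integral_nonneg) (simp add: assms)

lemma outer_meas:
  fixes g :: "real \<Rightarrow> 'a::metric_space" and lam kap mu :: "'a \<Rightarrow> real"
  assumes cg: "cadlag g" and hl: "continuous_on UNIV lam" and hk: "continuous_on UNIV kap"
    and hm: "continuous_on UNIV mu"
  shows "(\<lambda>x. indicator {0..t} x * (lam (g x) * exp (- kap (g x) * (LBINT r:{x..t}. mu (g r)))))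
          \<in> borel_measurable lborel"
proof (rule meas_exc[OF countable_jumps[OF cg]])
  fix s assume s: "s \<in> {0..t} - jumps g"
  have S: "{0..t} \<subseteq> {0::real..}" by auto
  have l: "((\<lambda>x. lam (g x)) \<longlongrightarrow> lam (g s)) (at s within {0..t})"
    by (rule cadlag_comp_cont[OF cg hl _ _ S]) (use s in auto)
  have k: "((\<lambda>x. kap (g x)) \<longlongrightarrow> kap (g s)) (at s within {0..t})"
    by (rule cadlag_comp_cont[OF cg hk _ _ S]) (use s in auto)
  have m: "((\<lambda>x. LBINT r:{x..t}. mu (g r)) \<longlongrightarrow> (LBINT r:{s..t}. mu (g r))) (at s within {0..t})"
    using M_cont[OF cg hm, of t] s unfolding continuous_on_def by blast
  show "((\<lambda>x. lam (g x) * exp (- kap (g x) * (LBINT r:{x..t}. mu (g r)))) \<longlongrightarrow>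
          lam (g s) * exp (- kap (g s) * (LBINT r:{s..t}. mu (g r)))) (at s within {0..t})"
    by (intro tendsto_mult l tendsto_exp tendsto_minus k m)
qed

lemma ptwise:
  fixes f :: "real \<Rightarrow> 'a::metric_space" and G :: "nat \<Rightarrow> real \<Rightarrow> 'a"
  assumes cf: "cadlag f"
    and P: "\<forall>\<eta>>0. \<exists>N. \<forall>n\<ge>N. \<forall>s\<in>{0..t}. \<exists>w\<in>{0..T}. \<bar>w - s\<bar> < \<eta> \<and> dist (f w) (G n s) < \<eta>"
    and s: "s \<in> {0..t}" "s \<notin> jumps f"
  shows "(\<lambda>n. G n s) \<longlonglongrightarrow> f s"
proof (rule tendstoI)
  fix \<epsilon> :: real assume \<epsilon>: "\<epsilon> > 0"
  have "(f \<longlongrightarrow> f s) (at s within {0..})" by (rule cadlag_cont[OF cf]) (use s in auto)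
  then have "eventually (\<lambda>w. dist (f w) (f s) < \<epsilon>/2) (at s within {0..})"
    using tendstoD \<epsilon> half_gt_zero by blast
  then obtain \<rho> where \<rho>: "\<rho> > 0" "\<forall>w\<in>{0..}. w \<noteq> s \<and> dist w s < \<rho> \<longrightarrow> dist (f w) (f s) < \<epsilon>/2"
    unfolding eventually_at by blast
  have "min \<rho> (\<epsilon>/2) > 0" using \<rho> \<epsilon> by simp
  then obtain N where N: "\<forall>n\<ge>N. \<forall>s\<in>{0..t}. \<exists>w\<in>{0..T}. \<bar>w - s\<bar> < min \<rho> (\<epsilon>/2) \<and> dist (f w) (G n s) < min \<rho> (\<epsilon>/2)"
    using P by blast
  show "eventually (\<lambda>n. dist (G n s) (f s) < \<epsilon>) sequentially"
    unfolding eventually_sequentially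
  proof (intro exI[of _ N] allI impI)
    fix n assume n: "N \<le> n"
    then obtain w where w: "w \<in> {0..T}" "\<bar>w - s\<bar> < min \<rho> (\<epsilon>/2)" "dist (f w) (G n s) < min \<rho> (\<epsilon>/2)"
      using N s by blast
    have fw: "dist (f w) (f s) < \<epsilon>/2"
    proof (cases "w = s")
      case True then show ?thesis using \<epsilon> by simp
    next
      case False then show ?thesis using \<rho>(2) w by (auto simp: dist_real_def)
    qed
    have "dist (G n s) (f s) \<le> dist (f w) (G n s) + dist (f w) (f s)"
      by (rule dist_triangle3)
    then show "dist (G n s) (f s) < \<epsilon>" using fw w(3) by linarith
  qed
qed

theorem lemma8:
  fixes lam kap mu :: "'a::metric_space \<Rightarrow> real" and t :: real
  assumes "continuous_on UNIV lam" "continuous_on UNIV kap" "continuous_on UNIV mu"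
    and "\<And>x. lam x \<ge> 0" "\<And>x. kap x \<ge> 0" "\<And>x. mu x \<ge> 0"
    and "t \<ge> 0"
  shows "\<forall>f\<in>Skorokhod_D. \<forall>e>0. \<exists>d>0. \<forall>g\<in>Skorokhod_D.
           skorokhod_dist f g < ereal d \<longrightarrow> \<bar>phi_t lam kap mu t g - phi_t lam kap mu t f\<bar> < e"
proof (intro ballI allI impI)
  note hl = assms(1) and hk = assms(2) and hm = assms(3) and kpos = assms(5) and mpos = assms(6)
    and t = assms(7)
  fix f :: "real \<Rightarrow> 'a" and e :: real
  assume fD: "f \<in> Skorokhod_D" and e: "e > 0"
  have cf: "cadlag f" using fD by (simp add: Skorokhod_D_def)
  let ?phi = "phi_t lam kap mu t"
  show "\<exists>d>0. \<forall>g\<in>Skorokhod_D. skorokhod_dist f g < ereal d \<longrightarrow> \<bar>?phi g - ?phi f\<bar> < e"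
  proof (rule ccontr)
    assume neg: "\<not> ?thesis"
    have "\<exists>g. g \<in> Skorokhod_D \<and> skorokhod_dist f g < ereal (inverse (real (Suc n))) \<and> \<not> \<bar>?phi g - ?phi f\<bar> < e" for n
    proof -
      have "inverse (real (Suc n)) > 0" by simp
      then show ?thesis using neg by blast
    qed
    then obtain G where G: "\<And>n. G n \<in> Skorokhod_D"
      "\<And>n. skorokhod_dist f (G n) < ereal (inverse (real (Suc n)))"
      "\<And>n. \<not> \<bar>?phi (G n) - ?phi f\<bar> < e"
      by metis
    define T where "T = 2*t+1"
    have P: "\<forall>\<eta>>0. \<exists>N. \<forall>n\<ge>N. \<forall>s\<in>{0..t}. \<exists>w\<in>{0..T}. \<bar>w - s\<bar> < \<eta> \<and> dist (f w) (G n s) < \<eta>"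
    proof (intro allI impI)
      fix \<eta> :: real assume eta: "\<eta> > 0"
      obtain d where d: "d > 0" "\<forall>g. skorokhod_dist f g < ereal d \<longrightarrow>
           (\<forall>s\<in>{0..t}. \<exists>w\<in>{0..2*t+1}. \<bar>w - s\<bar> < \<eta> \<and> dist (f w) (g s) < \<eta>)"
        using J1[OF t eta, of f] by blast
      obtain N where N: "inverse (real (Suc N)) < d" using reals_Archimedean d(1) by blast
      show "\<exists>N. \<forall>n\<ge>N. \<forall>s\<in>{0..t}. \<exists>w\<in>{0..T}. \<bar>w - s\<bar> < \<eta> \<and> dist (f w) (G n s) < \<eta>"
      proof (intro exI[of _ N] allI impI)
        fix n assume n: "N \<le> n"
        then have "inverse (real (Suc n)) \<le> inverse (real (Suc N))" by (simp add: le_imp_inverse_le)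
        then have "inverse (real (Suc n)) < d" using N by linarith
        then have "ereal (inverse (real (Suc n))) < ereal d" by simp
        then have "skorokhod_dist f (G n) < ereal d" using G(2)[of n] by (rule less_trans[rotated])
        then show "\<forall>s\<in>{0..t}. \<exists>w\<in>{0..T}. \<bar>w - s\<bar> < \<eta> \<and> dist (f w) (G n s) < \<eta>"
          using d(2) unfolding T_def by blast
      qed
    qed
    obtain \<delta>1 B1 where B1: "\<delta>1 > 0" "\<forall>s y. s \<in> {0..T} \<longrightarrow> dist y (f s) < \<delta>1 \<longrightarrow> \<bar>lam y\<bar> \<le> B1"
      using cadlag_bound[OF cf hl, of T] by blast
    obtain \<delta>2 B2 where B2: "\<delta>2 > 0" "\<forall>s y. s \<in> {0..T} \<longrightarrow> dist y (f s) < \<delta>2 \<longrightarrow> \<bar>kap y\<bar> \<le> B2"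
      using cadlag_bound[OF cf hk, of T] by blast
    obtain \<delta>3 B3 where B3: "\<delta>3 > 0" "\<forall>s y. s \<in> {0..T} \<longrightarrow> dist y (f s) < \<delta>3 \<longrightarrow> \<bar>mu y\<bar> \<le> B3"
      using cadlag_bound[OF cf hm, of T] by blast
    have "min \<delta>1 (min \<delta>2 \<delta>3) > 0" using B1 B2 B3 by simp
    then obtain N0 where N0: "\<forall>n\<ge>N0. \<forall>s\<in>{0..t}. \<exists>w\<in>{0..T}. \<bar>w - s\<bar> < min \<delta>1 (min \<delta>2 \<delta>3) \<and>
        dist (f w) (G n s) < min \<delta>1 (min \<delta>2 \<delta>3)"
      using P by blast
    define H where "H n = G (n + N0)" for n
    have cH: "cadlag (H n)" for n using G(1) by (simp add: H_def Skorokhod_D_def)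
    have bnd: "\<bar>lam (H n s)\<bar> \<le> B1 \<and> \<bar>mu (H n s)\<bar> \<le> B3" if "s \<in> {0..t}" for n s
    proof -
      have "\<exists>w\<in>{0..T}. \<bar>w - s\<bar> < min \<delta>1 (min \<delta>2 \<delta>3) \<and> dist (f w) (G (n + N0) s) < min \<delta>1 (min \<delta>2 \<delta>3)"
        using N0 that by simp
      then obtain w where w: "w \<in> {0..T}" "dist (f w) (H n s) < min \<delta>1 (min \<delta>2 \<delta>3)"
        unfolding H_def by blast
      then show ?thesis using B1(2) B3(2) by (simp add: dist_commute)
    qed
    have fb: "\<bar>lam (f s)\<bar> \<le> B1 \<and> \<bar>mu (f s)\<bar> \<le> B3" if "s \<in> {0..t}" for s
      using B1 B3 that unfolding T_def by auto
    have conv: "(\<lambda>n. H n s) \<longlonglongrightarrow> f s" if "s \<in> {0..t}" "s \<notin> jumps f" for s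
      using LIMSEQ_ignore_initial_segment[OF ptwise[OF cf P that], of N0] by (simp add: H_def)
    have convh: "(\<lambda>n. h (H n s)) \<longlonglongrightarrow> h (f s)" if "continuous_on UNIV h" "s \<in> {0..t}" "s \<notin> jumps f" for s h
      using continuous_on_tendsto_compose[OF that(1) conv[OF that(2,3)]] by simp
    have AEj: "AE x in lborel. x \<notin> jumps f"
      by (rule AE_not_in[OF countable_imp_null_set_lborel[OF countable_jumps[OF cf]]])
    have Mconv: "(\<lambda>n. LBINT r:{s..t}. mu (H n r)) \<longlonglongrightarrow> (LBINT r:{s..t}. mu (f r))" if s: "s \<in> {0..t}" for s
      unfolding set_lebesgue_integral_def
    proof (rule integral_dominated_convergence[where w="\<lambda>r. indicator {s..t} r * B3"])
      show "(\<lambda>r. indicator {s..t} r *\<^sub>R mu (f r)) \<in> borel_measurable lborel"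
        using cadlag_comp_int[OF cf hm, of s t] s unfolding set_integrable_def
        by (auto intro: borel_measurable_integrable)
      show "(\<lambda>r. indicator {s..t} r *\<^sub>R mu (H i r)) \<in> borel_measurable lborel" for i
        using cadlag_comp_int[OF cH hm, of s t] s unfolding set_integrable_def
        by (auto intro: borel_measurable_integrable)
      show "integrable lborel (\<lambda>r. indicator {s..t} r * B3)"
        by (intro integrable_mult_left integrable_real_indicator) (auto simp: emeasure_lborel_Icc_eq)
      show "AE r in lborel. (\<lambda>i. indicator {s..t} r *\<^sub>R mu (H i r)) \<longlonglongrightarrow> indicator {s..t} r *\<^sub>R mu (f r)"
        using AEj
      proof eventually_elim
        fix r assume r: "r \<notin> jumps f"
        show "(\<lambda>i. indicator {s..t} r *\<^sub>R mu (H i r)) \<longlonglongrightarrow> indicator {s..t} r *\<^sub>R mu (f r)"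
        proof (cases "r \<in> {s..t}")
          case True
          then have "r \<in> {0..t}" using s by auto
          then show ?thesis using True convh[OF hm _ r] by simp
        qed simp
      qed
      show "AE r in lborel. norm (indicator {s..t} r *\<^sub>R mu (H i r)) \<le> indicator {s..t} r * B3" for i
      proof (rule AE_I2)
        fix r
        show "norm (indicator {s..t} r *\<^sub>R mu (H i r)) \<le> indicator {s..t} r * B3"
        proof (cases "r \<in> {s..t}")
          case True
          then have "r \<in> {0..t}" using s by auto
          then show ?thesis using True bnd by simp
        qed simp
      qed
    qed
    define F where "F g x = lam (g x) * exp (- kap (g x) * (LBINT r:{x..t}. mu (g r)))" for g x
    have phiF: "?phi g = (LBINT x:{0..t}. F g x)" for g unfolding phi_t_def F_def by simp
    have Fb: "\<bar>F g x\<bar> \<le> \<bar>lam (g x)\<bar>" for g x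
    proof -
      have "kap (g x) * (LBINT r:{x..t}. mu (g r)) \<ge> 0"
        by (rule mult_nonneg_nonneg[OF kpos M_nonneg[of mu, OF mpos]])
      then have "exp (- kap (g x) * (LBINT r:{x..t}. mu (g r))) \<le> 1" by simp
      then show ?thesis unfolding F_def by (simp add: abs_mult mult_left_le)
    qed
    have "(\<lambda>n. LBINT x:{0..t}. F (H n) x) \<longlonglongrightarrow> (LBINT x:{0..t}. F f x)"
      unfolding set_lebesgue_integral_def
    proof (rule integral_dominated_convergence[where w="\<lambda>r. indicator {0..t} r * B1"])
      show "(\<lambda>r. indicator {0..t} r *\<^sub>R F f r) \<in> borel_measurable lborel"
        using outer_meas[OF cf hl hk hm, of t] by (simp add: F_def)
      show "(\<lambda>r. indicator {0..t} r *\<^sub>R F (H i) r) \<in> borel_measurable lborel" for i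
        using outer_meas[OF cH hl hk hm, of t] by (simp add: F_def)
      show "integrable lborel (\<lambda>r. indicator {0..t} r * B1)"
        by (intro integrable_mult_left integrable_real_indicator) (auto simp: emeasure_lborel_Icc_eq)
      show "AE r in lborel. (\<lambda>i. indicator {0..t} r *\<^sub>R F (H i) r) \<longlonglongrightarrow> indicator {0..t} r *\<^sub>R F f r"
        using AEj
      proof eventually_elim
        fix r assume r: "r \<notin> jumps f"
        show "(\<lambda>i. indicator {0..t} r *\<^sub>R F (H i) r) \<longlonglongrightarrow> indicator {0..t} r *\<^sub>R F f r"
        proof (cases "r \<in> {0..t}")
          case True
          have "(\<lambda>i. F (H i) r) \<longlonglongrightarrow> F f r"
            unfolding F_def
            by (intro tendsto_mult tendsto_exp tendsto_minus convh[OF hl True r] convh[OF hk True r] Mconv[OF True])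
          then show ?thesis using True by simp
        qed simp
      qed
      show "AE r in lborel. norm (indicator {0..t} r *\<^sub>R F (H i) r) \<le> indicator {0..t} r * B1" for i
      proof (rule AE_I2)
        fix r
        show "norm (indicator {0..t} r *\<^sub>R F (H i) r) \<le> indicator {0..t} r * B1"
        proof (cases "r \<in> {0..t}")
          case True
          then show ?thesis using Fb[of "H i" r] bnd[OF True, of i] by simp
        qed simp
      qed
    qed
    then have "(\<lambda>n. ?phi (H n)) \<longlonglongrightarrow> ?phi f" by (simp add: phiF)
    then have "(\<lambda>n. ?phi (H n) - ?phi f) \<longlonglongrightarrow> 0" by (simp add: LIM_zero)
    then have "eventually (\<lambda>n. dist (?phi (H n) - ?phi f) 0 < e) sequentially"
      using e by (rule tendstoD)
    then obtain n where "\<bar>?phi (H n) - ?phi f\<bar> < e" by (auto simp: eventually_sequentially dist_real_def)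
    then show False using G(3) by (simp add: H_def)
  qed
qed

end
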